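(* Let $F:\mathbb{S}^{n\times n}\to\mathbb{R}$ satisfy (F1), (F2) and (F3). Then there are smooth functions $F_\varepsilon:\mathbb{S}^{n\times n}\to\mathbb{R}$ converging to $F$ uniformly in $Lip(\mathbb{S}^{n\times n})$ as $\varepsilon\to0$, each satisfying (F1) and (F3), and such that $|DF_\varepsilon(z)\cdot z-F_\varepsilon(z)|\le\sqrt n\Lambda\varepsilon$ for all $z\in\mathbb{S}^{n\times n}$.
   Context: $\mathbb{S}^{n\times n}$ is the space of real symmetric $n\times n$ matrices; $DF_\varepsilon(z)\cdot z$ denotes the Frobenius pairing of the derivative with $z$. For $0<\lambda\le\Lambda$, $\mathcal M^\pm$ are the Pucci operators. (F1): $\mathcal M^-(M-N)\le F(M)-F(N)\le\mathcal M^+(M-N)$. (F2): $F(tM)=tF(M)$ for $t\ge0$. (F3): $F$ is concave. *)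

theory Defs
  imports "HOL-Analysis.Analysis"
begin

definition sym_mats :: "(real^'n^'n) set" where
  "sym_mats = {M. transpose M = M}"

definition symmetrize :: "real^'n^'n \<Rightarrow> real^'n^'n" where
  "symmetrize M = (1/2) *\<^sub>R (M + transpose M)"

definition ellip_class :: "real \<Rightarrow> real \<Rightarrow> (real^'n^'n) set" where
  "ellip_class lam Lam = {A. transpose A = A \<and>
     (\<forall>\<xi>::real^'n. lam * (\<xi> \<bullet> \<xi>) \<le> \<xi> \<bullet> (A *v \<xi>) \<and> \<xi> \<bullet> (A *v \<xi>) \<le> Lam * (\<xi> \<bullet> \<xi>))}"

definition pucci_plus :: "real \<Rightarrow> real \<Rightarrow> real^'n^'n \<Rightarrow> real" where
  "pucci_plus lam Lam M = (SUP A \<in> ellip_class lam Lam. trace (A ** M))"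

definition pucci_minus :: "real \<Rightarrow> real \<Rightarrow> real^'n^'n \<Rightarrow> real" where
  "pucci_minus lam Lam M = (INF A \<in> ellip_class lam Lam. trace (A ** M))"

definition F1 :: "real \<Rightarrow> real \<Rightarrow> (real^'n^'n \<Rightarrow> real) \<Rightarrow> bool" where
  "F1 lam Lam F \<longleftrightarrow> (\<forall>M\<in>sym_mats. \<forall>N\<in>sym_mats.
      pucci_minus lam Lam (M - N) \<le> F M - F N \<and> F M - F N \<le> pucci_plus lam Lam (M - N))"

definition F2 :: "(real^'n^'n \<Rightarrow> real) \<Rightarrow> bool" where
  "F2 F \<longleftrightarrow> (\<forall>M\<in>sym_mats. \<forall>t::real. t \<ge> 0 \<longrightarrow> F (t *\<^sub>R M) = t * F M)"

definition F3 :: "(real^'n^'n \<Rightarrow> real) \<Rightarrow> bool" where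
  "F3 F \<longleftrightarrow> concave_on sym_mats F"

fun iter_dderiv :: "'a::real_normed_vector list \<Rightarrow> ('a \<Rightarrow> real) \<Rightarrow> 'a \<Rightarrow> real" where
  "iter_dderiv [] f = f"
| "iter_dderiv (v # vs) f = (\<lambda>x. frechet_derivative (iter_dderiv vs f) (at x) v)"

definition smooth_fun :: "('a::real_normed_vector \<Rightarrow> real) \<Rightarrow> bool" where
  "smooth_fun f \<longleftrightarrow> (\<forall>vs. continuous_on UNIV (iter_dderiv vs f) \<and> iter_dderiv vs f differentiable_on UNIV)"

text \<open>A function on symmetric matrices is smooth iff its composition with the
  symmetrization projection is smooth on the whole matrix space.\<close>
definition smooth_on_sym :: "(real^'n^'n \<Rightarrow> real) \<Rightarrow> bool" where
  "smooth_on_sym f \<longleftrightarrow> smooth_fun (\<lambda>M. f (symmetrize M))"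

end

theory Submission
  imports Defs "HOL-Computational_Algebra.Polynomial"
begin

definition psi :: "real poly \<Rightarrow> real \<Rightarrow> real" where
  "psi P t = (if t > 0 then poly P (1/t) * exp (-(1/t)) else 0)"

definition Dp :: "real poly \<Rightarrow> real poly" where
  "Dp P = [:0,0,1:] * (P - pderiv P)"

lemma poly_div_exp_0: "((\<lambda>u. poly Q u / exp u) \<longlongrightarrow> (0::real)) at_top"
proof -
  have eq: "(\<lambda>u. poly Q u / exp u) = (\<lambda>u. \<Sum>i\<le>degree Q. coeff Q i * (u ^ i / exp u))"
    by (auto simp: poly_altdef sum_divide_distrib)
  show ?thesis unfolding eq
  proof (rule tendsto_null_sum)
    fix i
    show "((\<lambda>u. coeff Q i * (u ^ i / exp u)) \<longlongrightarrow> 0) at_top"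
      by (rule tendsto_mult_right_zero[OF tendsto_power_div_exp_0])
  qed
qed

lemma psi_quot_0: "((\<lambda>y. psi P y / y) \<longlongrightarrow> 0) (at (0::real))"
proof -
  have L: "((\<lambda>y. psi P y / y) \<longlongrightarrow> 0) (at_left (0::real))"
  proof (rule tendsto_eventually)
    show "\<forall>\<^sub>F y in at_left 0. psi P y / y = 0"
      by (auto simp: eventually_at_left_field psi_def intro!: exI[of _ "-1"])
  qed
  have R: "((\<lambda>y. psi P y / y) \<longlongrightarrow> 0) (at_right (0::real))"
  proof -
    have 1: "((\<lambda>u. poly ([:0,1:] * P) u / exp u) \<longlongrightarrow> (0::real)) at_top"
      by (rule poly_div_exp_0)
    have 2: "((\<lambda>y. poly ([:0,1:] * P) (inverse y) / exp (inverse y)) \<longlongrightarrow> (0::real)) (at_right 0)"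
      using filterlim_compose[OF 1 filterlim_inverse_at_top_right] by (simp add: o_def)
    show ?thesis
    proof (rule Lim_transform_eventually[OF 2])
      show "\<forall>\<^sub>F y in at_right 0. poly ([:0,1:] * P) (inverse y) / exp (inverse y) = psi P y / y"
        unfolding eventually_at_right_field
        by (auto simp: psi_def exp_minus field_simps intro!: exI[of _ 1])
    qed
  qed
  show ?thesis using L R by (simp add: filterlim_split_at)
qed

lemma psi_deriv: "(psi P has_real_derivative psi (Dp P) t) (at t)"
proof (cases "t > 0")
  case True
  have d: "((\<lambda>t. poly P (1/t) * exp (-(1/t))) has_real_derivative psi (Dp P) t) (at t)"
  proof -
    have "((\<lambda>t. poly P (1/t) * exp (-(1/t))) has_real_derivative
       (poly (pderiv P) (1/t) * (-(1/t^2))) * exp (-(1/t)) + poly P (1/t) * (exp (-(1/t)) * (1/t^2))) (at t)"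
      using True
      by (auto intro!: derivative_eq_intros DERIV_chain2[OF poly_DERIV] simp: power2_eq_square field_simps)
    moreover have "(poly (pderiv P) (1/t) * (-(1/t^2))) * exp (-(1/t)) + poly P (1/t) * (exp (-(1/t)) * (1/t^2))
        = psi (Dp P) t"
      using True by (simp add: psi_def Dp_def algebra_simps power2_eq_square)
    ultimately show ?thesis by simp
  qed
  show ?thesis
    by (rule has_field_derivative_transform_within_open[OF d, of "{0<..}"]) (use True in \<open>auto simp: psi_def\<close>)
next
  case False
  show ?thesis
  proof (cases "t < 0")
    case True
    have d: "((\<lambda>t. 0) has_real_derivative psi (Dp P) t) (at t)"
      using True by (simp add: psi_def)
    show ?thesis
      by (rule has_field_derivative_transform_within_open[OF d, of "{..<0}"]) (use True in \<open>auto simp: psi_def\<close>)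
  next
    case False
    with \<open>\<not> t > 0\<close> have t0: "t = 0" by simp
    have "(psi P has_real_derivative 0) (at 0)"
      unfolding has_field_derivative_iff using psi_quot_0[of P] by (simp add: psi_def)
    thus ?thesis using t0 by (simp add: psi_def)
  qed
qed

definition bd :: "nat \<Rightarrow> real \<Rightarrow> real" where
  "bd k s = (-1)^k * psi ((Dp ^^ k) 1) (1 - s)"

lemma bd_deriv: "(bd k has_real_derivative bd (Suc k) s) (at s)"
  unfolding bd_def
  by (auto intro!: derivative_eq_intros DERIV_chain2[OF psi_deriv])

lemma bd_zero: "s \<ge> 1 \<Longrightarrow> bd k s = 0"
  by (simp add: bd_def psi_def)

lemma bd0_nonneg: "bd 0 s \<ge> 0"
  by (simp add: bd_def psi_def)

lemma bd0_pos: "s < 1 \<Longrightarrow> bd 0 s > 0"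
  by (simp add: bd_def psi_def)

lemma bd_cont: "continuous_on UNIV (bd k)"
  using bd_deriv by (meson DERIV_isCont continuous_at_imp_continuous_on)


inductive_set Kf :: "('a::euclidean_space \<Rightarrow> real) set" where
  base: "(\<lambda>x. bd k (x \<bullet> x)) \<in> Kf"
| lin: "f \<in> Kf \<Longrightarrow> (\<lambda>x. (x \<bullet> w) * f x) \<in> Kf"
| add: "f \<in> Kf \<Longrightarrow> g \<in> Kf \<Longrightarrow> (\<lambda>x. f x + g x) \<in> Kf"
| smul: "f \<in> Kf \<Longrightarrow> (\<lambda>x. c * f x) \<in> Kf"

lemma Kf_deriv:
  assumes "f \<in> Kf"
  shows "\<exists>D. (\<forall>x. (f has_derivative D x) (at x)) \<and> (\<forall>v. (\<lambda>x. D x v) \<in> Kf)"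
  using assms
proof induction
  case (base k)
  have "((\<lambda>x. bd k (x \<bullet> x)) has_derivative (\<lambda>h. (x \<bullet> h + h \<bullet> x) * bd (Suc k) (x \<bullet> x))) (at x)" for x :: 'a
    by (rule DERIV_compose_FDERIV[OF bd_deriv]) (auto intro!: derivative_eq_intros)
  moreover have "(\<lambda>x::'a. (x \<bullet> v + v \<bullet> x) * bd (Suc k) (x \<bullet> x)) \<in> Kf" for v
  proof -
    have "(\<lambda>x::'a. (x \<bullet> (2 *\<^sub>R v)) * bd (Suc k) (x \<bullet> x)) \<in> Kf" by (intro Kf.lin Kf.base)
    moreover have "(\<lambda>x::'a. (x \<bullet> (2 *\<^sub>R v)) * bd (Suc k) (x \<bullet> x)) = (\<lambda>x. (x \<bullet> v + v \<bullet> x) * bd (Suc k) (x \<bullet> x))"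
      by (auto simp: inner_commute)
    ultimately show ?thesis by simp
  qed
  ultimately show ?case by (intro exI[of _ "\<lambda>x h. (x \<bullet> h + h \<bullet> x) * bd (Suc k) (x \<bullet> x)"]) auto
next
  case (lin f w)
  then obtain D where D: "\<And>x. (f has_derivative D x) (at x)" "\<And>v. (\<lambda>x. D x v) \<in> Kf" by blast
  have "((\<lambda>x. (x \<bullet> w) * f x) has_derivative (\<lambda>h. (x \<bullet> w) * D x h + (h \<bullet> w) * f x)) (at x)" for x
    by (auto intro!: derivative_eq_intros D(1))
  moreover have "(\<lambda>x. (x \<bullet> w) * D x v + (v \<bullet> w) * f x) \<in> Kf" for v
    by (intro Kf.add Kf.lin Kf.smul D(2) lin.hyps)
  ultimately show ?case by (intro exI[of _ "\<lambda>x h. (x \<bullet> w) * D x h + (h \<bullet> w) * f x"]) auto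
next
  case (add f g)
  then obtain D E where D: "\<And>x. (f has_derivative D x) (at x)" "\<And>v. (\<lambda>x. D x v) \<in> Kf"
    and E: "\<And>x. (g has_derivative E x) (at x)" "\<And>v. (\<lambda>x. E x v) \<in> Kf" by blast
  have "((\<lambda>x. f x + g x) has_derivative (\<lambda>h. D x h + E x h)) (at x)" for x
    by (auto intro!: derivative_eq_intros D(1) E(1))
  moreover have "(\<lambda>x. D x v + E x v) \<in> Kf" for v
    by (intro Kf.add D(2) E(2))
  ultimately show ?case by (intro exI[of _ "\<lambda>x h. D x h + E x h"]) auto
next
  case (smul f c)
  then obtain D where D: "\<And>x. (f has_derivative D x) (at x)" "\<And>v. (\<lambda>x. D x v) \<in> Kf" by blast
  have "((\<lambda>x. c * f x) has_derivative (\<lambda>h. c * D x h)) (at x)" for x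
    by (auto intro!: derivative_eq_intros D(1))
  moreover have "(\<lambda>x. c * D x v) \<in> Kf" for v
    by (intro Kf.smul D(2))
  ultimately show ?case by (intro exI[of _ "\<lambda>x h. c * D x h"]) auto
qed

lemma Kf_zero:
  assumes "f \<in> Kf" "norm x \<ge> 1"
  shows "f x = 0"
  using assms(1)
proof induction
  case (base k)
  have "x \<bullet> x \<ge> 1" using assms(2)
    by (metis norm_ge_zero one_le_power power2_norm_eq_inner)
  thus ?case by (simp add: bd_zero)
qed auto

lemma Kf_differentiable: "f \<in> Kf \<Longrightarrow> f differentiable (at x)"
  using Kf_deriv unfolding differentiable_def by blast

lemma Kf_cont: "f \<in> Kf \<Longrightarrow> continuous_on UNIV f"
  using Kf_differentiable differentiable_imp_continuous_within continuous_at_imp_continuous_on by blast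

lemma Kf_frechet: "f \<in> Kf \<Longrightarrow> (\<lambda>x. frechet_derivative f (at x) v) \<in> Kf"
proof -
  assume "f \<in> Kf"
  then obtain D where D: "\<And>x. (f has_derivative D x) (at x)" "\<And>v. (\<lambda>x. D x v) \<in> Kf"
    using Kf_deriv by blast
  have "(\<lambda>x. frechet_derivative f (at x) v) = (\<lambda>x. D x v)"
    using frechet_derivative_at[OF D(1)] by metis
  thus ?thesis using D(2) by simp
qed


definition conv :: "('a::euclidean_space \<Rightarrow> real) \<Rightarrow> ('a \<Rightarrow> real) \<Rightarrow> 'a \<Rightarrow> real" where
  "conv G \<phi> x = integral UNIV (\<lambda>y. G y * \<phi> (x - y))"

lemma conv_box:
  assumes G: "continuous_on UNIV G" and phi: "\<phi> \<in> Kf" and sub: "cball x 1 \<subseteq> cbox a b"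
  shows "conv G \<phi> x = integral (cbox a b) (\<lambda>y. G y * \<phi> (x - y))"
    and "(\<lambda>y. G y * \<phi> (x - y)) integrable_on cbox a b"
proof -
  let ?h = "\<lambda>y. G y * \<phi> (x - y)"
  have ch: "continuous_on UNIV ?h"
    using Kf_cont[OF phi] G by (auto intro!: continuous_intros continuous_on_compose2[of UNIV \<phi>])
  show int: "?h integrable_on cbox a b"
    by (rule integrable_continuous) (rule continuous_on_subset[OF ch], auto)
  have z: "?h y = 0" if "y \<notin> cbox a b" for y
  proof -
    have "y \<notin> cball x 1" using that sub by blast
    hence "norm (x - y) \<ge> 1" by (simp add: dist_norm)
    thus ?thesis using Kf_zero[OF phi] by simp
  qed
  have "(?h has_integral integral (cbox a b) ?h) (cbox a b)"
    using int by (simp add: has_integral_integral)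
  hence "((\<lambda>y. if y \<in> cbox a b then ?h y else 0) has_integral integral (cbox a b) ?h) UNIV"
    by (simp add: has_integral_restrict_UNIV)
  moreover have "(\<lambda>y. if y \<in> cbox a b then ?h y else 0) = ?h" using z by auto
  ultimately have "(?h has_integral integral (cbox a b) ?h) UNIV" by simp
  thus "conv G \<phi> x = integral (cbox a b) ?h"
    unfolding conv_def by (rule integral_unique)
qed

lemma frechet_lin_expand:
  assumes "\<phi> differentiable (at z)"
  shows "frechet_derivative \<phi> (at z) h = (\<Sum>i\<in>Basis. (h \<bullet> i) * frechet_derivative \<phi> (at z) i)"
proof -
  have lin: "linear (frechet_derivative \<phi> (at z))" by (rule linear_frechet_derivative[OF assms])
  have "frechet_derivative \<phi> (at z) h = frechet_derivative \<phi> (at z) (\<Sum>i\<in>Basis. (h \<bullet> i) *\<^sub>R i)"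
    by (simp add: euclidean_representation)
  also have "\<dots> = (\<Sum>i\<in>Basis. (h \<bullet> i) * frechet_derivative \<phi> (at z) i)"
    by (simp add: linear_sum[OF lin] linear_scale[OF lin])
  finally show ?thesis .
qed

lemma conv_has_derivative:
  assumes G: "continuous_on UNIV G" and phi: "\<phi> \<in> Kf"
  shows "(conv G \<phi> has_derivative (\<lambda>h. conv G (\<lambda>z. frechet_derivative \<phi> (at z) h) x0)) (at x0)"
proof -
  obtain a where a: "cball x0 2 \<subseteq> cbox (-a) a"
    using bounded_subset_cbox_symmetric[OF bounded_cball] by blast
  define U where "U = ball x0 1"
  define d where "d i = (\<lambda>z. frechet_derivative \<phi> (at z) i)" for i
  have dK: "d i \<in> Kf" for i unfolding d_def by (rule Kf_frechet[OF phi])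
  define f where "f x t = G t * \<phi> (x - t)" for x t
  define fx where "fx x t = (\<Sum>i\<in>Basis. (G t * d i (x - t)) *\<^sub>R blinfun_inner_left i)" for x t
  have fx_apply: "blinfun_apply (fx x t) h = G t * frechet_derivative \<phi> (at (x - t)) h" for x t h
  proof -
    have "blinfun_apply (fx x t) h = (\<Sum>i\<in>Basis. (G t * d i (x - t)) * (h \<bullet> i))"
      unfolding fx_def by (simp add: blinfun.sum_left blinfun.scaleR_left)
    also have "\<dots> = G t * (\<Sum>i\<in>Basis. (h \<bullet> i) * frechet_derivative \<phi> (at (x - t)) i)"
      by (simp add: sum_distrib_left d_def mult_ac)
    also have "\<dots> = G t * frechet_derivative \<phi> (at (x - t)) h"
      using frechet_lin_expand[OF Kf_differentiable[OF phi], of "x - t" h] by simp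
    finally show ?thesis .
  qed
  have sub: "cball x 1 \<subseteq> cbox (-a) a" if "x \<in> U" for x
  proof
    fix y assume "y \<in> cball x 1"
    hence "dist x0 y \<le> 2" using that unfolding U_def
      by (smt (verit, best) dist_triangle mem_ball mem_cball)
    thus "y \<in> cbox (-a) a" using a by auto
  qed
  have der: "((\<lambda>x. f x t) has_derivative blinfun_apply (fx x t)) (at x within U)" for x t
  proof -
    have "(\<phi> has_derivative frechet_derivative \<phi> (at (x - t))) (at (x - t))"
      using Kf_differentiable[OF phi] frechet_derivative_works by blast
    hence "((\<lambda>x. \<phi> (x - t)) has_derivative frechet_derivative \<phi> (at (x - t))) (at x within U)"
      by (rule has_derivative_compose[of "\<lambda>x. x - t" "\<lambda>h. h", OF _ , unfolded o_def, rotated]) (auto intro!: derivative_eq_intros)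
    hence "((\<lambda>x. G t * \<phi> (x - t)) has_derivative (\<lambda>h. G t * frechet_derivative \<phi> (at (x - t)) h)) (at x within U)"
      by (auto intro!: derivative_eq_intros)
    thus ?thesis unfolding f_def fx_apply[abs_def] by (simp add: fx_apply)
  qed
  have cG: "continuous_on S G" for S using G continuous_on_subset by blast
  have cd: "continuous_on UNIV (d i)" for i using Kf_cont[OF dK] .
  have cont: "continuous_on (U \<times> cbox (-a) a) (\<lambda>(x, t). fx x t)"
    unfolding fx_def split_beta
    by (intro continuous_intros continuous_on_compose2[OF cG, of _ snd] continuous_on_compose2[OF cd, of _ "\<lambda>p. fst p - snd p"]) auto
  have intf: "f x integrable_on cbox (-a) a" if "x \<in> U" for x
    unfolding f_def using conv_box(2)[OF G phi sub[OF that]] .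
  have L: "((\<lambda>x. integral (cbox (-a) a) (f x)) has_derivative integral (cbox (-a) a) (fx x0)) (at x0 within U)"
    by (rule leibniz_rule[OF der intf cont]) (auto simp: U_def)
  have intfx: "fx x0 integrable_on cbox (-a) a"
  proof (rule integrable_continuous)
    have "continuous_on (cbox (-a) a) (\<lambda>t. (x0, t))" by (intro continuous_intros)
    moreover have "(\<lambda>t. (x0, t)) ` cbox (-a) a \<subseteq> U \<times> cbox (-a) a" by (auto simp: U_def)
    ultimately show "continuous_on (cbox (-a) a) (fx x0)"
      using continuous_on_compose2[OF cont, of "cbox (-a) a" "\<lambda>t. (x0, t)"] by simp
  qed
  have eqD: "blinfun_apply (integral (cbox (-a) a) (fx x0)) = (\<lambda>h. conv G (\<lambda>z. frechet_derivative \<phi> (at z) h) x0)"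
  proof
    fix h
    have "blinfun_apply (integral (cbox (-a) a) (fx x0)) h = integral (cbox (-a) a) (\<lambda>t. G t * frechet_derivative \<phi> (at (x0 - t)) h)"
      by (simp add: blinfun_apply_integral[OF intfx] fx_apply)
    also have "\<dots> = conv G (d h) x0"
      using conv_box(1)[OF G dK sub, of x0] by (simp add: U_def d_def)
    finally show "blinfun_apply (integral (cbox (-a) a) (fx x0)) h = conv G (\<lambda>z. frechet_derivative \<phi> (at z) h) x0"
      by (simp add: d_def)
  qed
  have L2: "((\<lambda>x. integral (cbox (-a) a) (f x)) has_derivative integral (cbox (-a) a) (fx x0)) (at x0)"
  proof -
    have "at x0 within U = at x0" by (rule at_within_open) (auto simp: U_def)
    thus ?thesis using L by simp
  qed
  show ?thesis
    unfolding eqD[symmetric]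
    by (rule has_derivative_transform_within_open[OF L2, of U]) (auto simp: U_def f_def[abs_def] conv_box(1)[OF G phi sub[unfolded U_def]])
qed

lemma smooth_family:
  assumes S: "\<And>f. f \<in> S \<Longrightarrow> continuous_on UNIV f \<and> f differentiable_on UNIV \<and> (\<forall>v. (\<lambda>x. frechet_derivative f (at x) v) \<in> S)"
    and f: "f \<in> S"
  shows "smooth_fun f"
proof -
  have mem: "iter_dderiv vs f \<in> S" for vs
    by (induction vs) (use f S in auto)
  show ?thesis unfolding smooth_fun_def using S[OF mem] by blast
qed

definition Fam :: "('a::euclidean_space \<Rightarrow> real) \<Rightarrow> real \<Rightarrow> ('a \<Rightarrow> real) set" where
  "Fam G r = {g. \<exists>c \<phi>. \<phi> \<in> Kf \<and> g = (\<lambda>x. c * conv G \<phi> (x /\<^sub>R r))}"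

lemma Fam_props:
  assumes G: "continuous_on UNIV G" and g: "g \<in> Fam G r"
  shows "continuous_on UNIV g \<and> g differentiable_on UNIV \<and> (\<forall>v. (\<lambda>x. frechet_derivative g (at x) v) \<in> Fam G r)"
proof -
  obtain c \<phi> where phi: "\<phi> \<in> Kf" and geq: "g = (\<lambda>x. c * conv G \<phi> (x /\<^sub>R r))"
    using g unfolding Fam_def by blast
  have D: "(g has_derivative (\<lambda>h. c * conv G (\<lambda>z. frechet_derivative \<phi> (at z) (h /\<^sub>R r)) (x /\<^sub>R r))) (at x)" for x
  proof -
    have "((\<lambda>x. conv G \<phi> (x /\<^sub>R r)) has_derivative (\<lambda>h. conv G (\<lambda>z. frechet_derivative \<phi> (at z) (h /\<^sub>R r)) (x /\<^sub>R r))) (at x)"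
    proof -
      have sc: "((\<lambda>x. x /\<^sub>R r) has_derivative (\<lambda>h. h /\<^sub>R r)) (at x)"
        by (rule bounded_linear_imp_has_derivative) (simp add: bounded_linear_scaleR_right)
      show ?thesis
        using has_derivative_compose[OF sc conv_has_derivative[OF G phi, of "x /\<^sub>R r"]] by (simp add: o_def)
    qed
    thus ?thesis unfolding geq by (auto intro!: derivative_eq_intros)
  qed
  have diff: "g differentiable (at x)" for x using D unfolding differentiable_def by blast
  have "(\<lambda>x. frechet_derivative g (at x) v) \<in> Fam G r" for v
  proof -
    have "(\<lambda>x. frechet_derivative g (at x) v) = (\<lambda>x. c * conv G (\<lambda>z. frechet_derivative \<phi> (at z) (v /\<^sub>R r)) (x /\<^sub>R r))"
      using frechet_derivative_at[OF D] by metis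
    thus ?thesis unfolding Fam_def using Kf_frechet[OF phi] by blast
  qed
  moreover have "continuous_on UNIV g"
    using diff differentiable_imp_continuous_within continuous_at_imp_continuous_on by blast
  ultimately show ?thesis using diff by (auto simp: differentiable_on_def differentiable_at_withinI)
qed

lemma Fam_smooth: "continuous_on UNIV G \<Longrightarrow> g \<in> Fam G r \<Longrightarrow> smooth_fun g"
  by (rule smooth_family[of "Fam G r"]) (auto dest: Fam_props)


lemma quad_axis:
  fixes A :: "real^'n^'n"
  shows "(axis i 1 + s *\<^sub>R axis j 1) \<bullet> (A *v (axis i 1 + s *\<^sub>R axis j 1)) = (A$i$i) + s*(A$i$j) + s*(A$j$i) + s * s * (A$j$j)"
  by (simp add: matrix_vector_right_distrib inner_add_left inner_add_right inner_axis' matrix_vector_mult_basis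
      column_def algebra_simps matrix_vector_mult_scaleR)

lemma quad_axis1:
  fixes A :: "real^'n^'n"
  shows "(axis i 1) \<bullet> (A *v (axis i 1)) = A$i$i"
  by (simp add: inner_axis' matrix_vector_mult_basis column_def)

lemma norm_axis_sq: "i \<noteq> j \<Longrightarrow> (axis i (1::real) + s *\<^sub>R axis j 1) \<bullet> (axis i 1 + s *\<^sub>R axis j 1) = 1 + s * s"
  by (simp add: inner_add_left inner_add_right inner_axis_axis)

lemma ellip_sym: "A \<in> ellip_class lam Lam \<Longrightarrow> A$j$i = A$i$j"
  unfolding ellip_class_def by (metis (mono_tags, lifting) mem_Collect_eq transpose_def vec_lambda_beta)

lemma ellip_entry:
  fixes A :: "real^'n^'n"
  assumes A: "A \<in> ellip_class lam Lam" and lam: "0 < lam"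
  shows "\<bar>A$i$j\<bar> \<le> Lam"
proof -
  have q: "lam * (\<xi> \<bullet> \<xi>) \<le> \<xi> \<bullet> (A *v \<xi>) \<and> \<xi> \<bullet> (A *v \<xi>) \<le> Lam * (\<xi> \<bullet> \<xi>)" for \<xi>
    using A unfolding ellip_class_def by blast
  have dii: "lam \<le> A$k$k \<and> A$k$k \<le> Lam" for k
    using q[of "axis k 1"] by (simp add: quad_axis1 inner_axis_axis)
  show ?thesis
  proof (cases "i = j")
    case True thus ?thesis using dii[of i] lam by auto
  next
    case False
    have sy: "A$j$i = A$i$j" by (rule ellip_sym[OF A])
    have p: "A$i$i + 2*(A$i$j) + A$j$j \<le> 2 * Lam"
      using q[of "axis i 1 + 1 *\<^sub>R axis j 1"] quad_axis[of i 1 j A] norm_axis_sq[OF False, of 1] sy by simp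
    have m: "A$i$i - 2*(A$i$j) + A$j$j \<le> 2 * Lam"
      using q[of "axis i 1 + (-1) *\<^sub>R axis j 1"] quad_axis[of i "-1" j A] norm_axis_sq[OF False, of "-1"] sy by simp
    show ?thesis using p m dii[of i] dii[of j] lam by linarith
  qed
qed

lemma trace_bound:
  fixes A X :: "real^'n^'n"
  assumes A: "A \<in> ellip_class lam Lam" and lam: "0 < lam" and B: "\<And>i j. \<bar>X$i$j\<bar> \<le> B"
  shows "\<bar>trace (A ** X)\<bar> \<le> Lam * real (CARD('n))^2 * B"
proof -
  have "\<bar>trace (A ** X)\<bar> = \<bar>\<Sum>i\<in>UNIV. \<Sum>k\<in>UNIV. A$i$k * X$k$i\<bar>"
    by (simp add: trace_def matrix_matrix_mult_def)
  also have "\<dots> \<le> (\<Sum>i\<in>(UNIV::'n set). \<Sum>k\<in>(UNIV::'n set). Lam * B)"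
  proof -
    have ik: "\<bar>A$i$k * X$k$i\<bar> \<le> Lam * B" for i k
      unfolding abs_mult by (rule mult_mono[OF ellip_entry[OF A lam] B]) (auto intro: order_trans[OF abs_ge_zero ellip_entry[OF A lam]])
    have "\<bar>\<Sum>i\<in>UNIV. \<Sum>k\<in>UNIV. A$i$k * X$k$i\<bar> \<le> (\<Sum>i\<in>(UNIV::'n set). \<Sum>k\<in>(UNIV::'n set). \<bar>A$i$k * X$k$i\<bar>)"
      by (rule order_trans[OF sum_abs sum_mono[OF sum_abs]])
    also have "\<dots> \<le> (\<Sum>i\<in>(UNIV::'n set). \<Sum>k\<in>(UNIV::'n set). Lam * B)"
      by (intro sum_mono ik)
    finally show ?thesis .
  qed
  also have "\<dots> = Lam * real (CARD('n))^2 * B" by (simp add: power2_eq_square)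
  finally show ?thesis .
qed

lemma ellip_nonempty: "0 < lam \<Longrightarrow> lam \<le> Lam \<Longrightarrow> (lam *\<^sub>R mat 1 :: real^'n^'n) \<in> ellip_class lam Lam"
proof -
  assume l: "0 < lam" "lam \<le> Lam"
  have t: "transpose (lam *\<^sub>R mat 1 :: real^'n^'n) = lam *\<^sub>R mat 1"
    by (simp add: vec_eq_iff transpose_def mat_def)
  have v: "(lam *\<^sub>R mat 1 :: real^'n^'n) *v \<xi> = lam *\<^sub>R \<xi>" for \<xi>
    by (metis matrix_vector_mul_lid scaleR_matrix_vector_assoc)
  have "lam * (\<xi> \<bullet> \<xi>) \<le> Lam * (\<xi> \<bullet> \<xi>)" for \<xi> :: "real^'n"
    using l by (simp add: mult_right_mono)
  thus ?thesis using t v unfolding ellip_class_def by auto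
qed

lemma pucci_bounds:
  fixes X :: "real^'n^'n"
  assumes lam: "0 < lam" "lam \<le> Lam" and B: "\<And>i j. \<bar>X$i$j\<bar> \<le> B"
  shows "\<bar>pucci_plus lam Lam X\<bar> \<le> Lam * real (CARD('n))^2 * B"
    and "\<bar>pucci_minus lam Lam X\<bar> \<le> Lam * real (CARD('n))^2 * B"
proof -
  let ?C = "Lam * real (CARD('n))^2 * B"
  let ?E = "ellip_class lam Lam :: (real^'n^'n) set"
  have ne: "?E \<noteq> {}" using ellip_nonempty[OF lam] by blast
  have bd: "\<bar>trace (A ** X)\<bar> \<le> ?C" if "A \<in> ?E" for A using trace_bound[OF that lam(1) B] .
  have bd1: "trace (A ** X) \<le> ?C" if "A \<in> ?E" for A using bd[OF that] by linarith
  have bd2: "-?C \<le> trace (A ** X)" if "A \<in> ?E" for A using bd[OF that] by linarith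
  have ba: "bdd_above ((\<lambda>A. trace (A ** X)) ` ?E)"
    using bd by (intro bdd_aboveI2[where M="?C"]) (auto simp: abs_le_iff)
  have bb: "bdd_below ((\<lambda>A. trace (A ** X)) ` ?E)"
  proof (intro bdd_belowI2[where m="-?C"])
    fix x assume "x \<in> ?E"
    from bd[OF this] show "-?C \<le> trace (x ** X)" by linarith
  qed
  obtain A0 where A0: "A0 \<in> ?E" using ne by blast
  have "pucci_plus lam Lam X \<le> ?C"
    unfolding pucci_plus_def using bd1 ne by (intro cSUP_least) auto
  moreover have "pucci_plus lam Lam X \<ge> -?C"
    unfolding pucci_plus_def using bd[OF A0] cSUP_upper[OF A0 ba] by (auto simp: abs_le_iff)
  ultimately show "\<bar>pucci_plus lam Lam X\<bar> \<le> ?C" by auto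
  have "pucci_minus lam Lam X \<ge> -?C"
    unfolding pucci_minus_def using bd2 ne by (intro cINF_greatest) auto
  moreover have "pucci_minus lam Lam X \<le> ?C"
    unfolding pucci_minus_def using bd[OF A0] cINF_lower[OF bb A0] by (auto simp: abs_le_iff)
  ultimately show "\<bar>pucci_minus lam Lam X\<bar> \<le> ?C" by auto
qed

lemma F_lip:
  fixes F :: "real^'n^'n \<Rightarrow> real"
  assumes lam: "0 < lam" "lam \<le> Lam" and F: "F1 lam Lam F" and MN: "M \<in> sym_mats" "N \<in> sym_mats"
    and B: "\<And>i j. \<bar>(M - N)$i$j\<bar> \<le> B"
  shows "\<bar>F M - F N\<bar> \<le> Lam * real (CARD('n))^2 * B"
  using F MN pucci_bounds[OF lam B] unfolding F1_def by (smt (verit))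


lemma sym_entry: "symmetrize X $ i $ j = (X$i$j + X$j$i) / 2"
  by (simp add: symmetrize_def transpose_def)

lemma sym_in: "symmetrize X \<in> sym_mats"
  by (simp add: sym_mats_def vec_eq_iff transpose_def sym_entry)

lemma sym_id: "M \<in> sym_mats \<Longrightarrow> symmetrize M = M"
  unfolding sym_mats_def by (simp add: symmetrize_def)

lemma sym_lin: "symmetrize (a *\<^sub>R X + b *\<^sub>R Y) = a *\<^sub>R symmetrize X + b *\<^sub>R symmetrize Y"
  by (simp add: vec_eq_iff sym_entry algebra_simps add_divide_distrib)

lemma sym_diff: "symmetrize (X - Y) = symmetrize X - symmetrize Y"
  by (simp add: vec_eq_iff sym_entry field_simps)

lemma sym_scale: "symmetrize (a *\<^sub>R X) = a *\<^sub>R symmetrize X"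
  by (simp add: vec_eq_iff sym_entry algebra_simps)

lemma sym_entry_bound: "\<bar>symmetrize D $ i $ j\<bar> \<le> norm D"
proof -
  have "\<bar>D$i$j\<bar> \<le> norm D" using component_le_norm_cart[of "D$i" j] Finite_Cartesian_Product.norm_nth_le[of D i] by linarith
  moreover have "\<bar>D$j$i\<bar> \<le> norm D" using component_le_norm_cart[of "D$j" i] Finite_Cartesian_Product.norm_nth_le[of D j] by linarith
  ultimately show ?thesis by (simp add: sym_entry)
qed

lemma sym_mats_diff: "M \<in> sym_mats \<Longrightarrow> N \<in> sym_mats \<Longrightarrow> M - N \<in> sym_mats"
  unfolding sym_mats_def by (simp add: vec_eq_iff transpose_def)

lemma sym_mats_lin: "M \<in> sym_mats \<Longrightarrow> N \<in> sym_mats \<Longrightarrow> a *\<^sub>R M + b *\<^sub>R N \<in> sym_mats"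
  unfolding sym_mats_def by (simp add: vec_eq_iff transpose_def)

lemma G_lip:
  fixes F :: "real^'n^'n \<Rightarrow> real"
  assumes lam: "0 < lam" "lam \<le> Lam" and F: "F1 lam Lam F"
  shows "\<bar>F (symmetrize X) - F (symmetrize Y)\<bar> \<le> Lam * real (CARD('n))^2 * norm (X - Y)"
proof (rule F_lip[OF lam F sym_in sym_in])
  fix i j show "\<bar>(symmetrize X - symmetrize Y) $ i $ j\<bar> \<le> norm (X - Y)"
    using sym_entry_bound[of "X - Y" i j] by (simp add: sym_diff)
qed

lemma G_hom:
  assumes "F2 F" "t \<ge> 0"
  shows "F (symmetrize (t *\<^sub>R X)) = t * F (symmetrize X)"
  using assms(1)[unfolded F2_def, rule_format, OF sym_in assms(2)] by (simp add: sym_scale)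

lemma IA_le:
  fixes \<rho> h :: "'a::euclidean_space \<Rightarrow> real"
  assumes cr: "continuous_on (cbox a b) \<rho>" and nn: "\<And>z. \<rho> z \<ge> 0" and one: "integral (cbox a b) \<rho> = 1"
    and ch: "continuous_on (cbox a b) h" and le: "\<And>z. z \<in> cbox a b \<Longrightarrow> \<rho> z \<noteq> 0 \<Longrightarrow> h z \<le> C"
  shows "integral (cbox a b) (\<lambda>z. h z * \<rho> z) \<le> C"
proof -
  have "integral (cbox a b) (\<lambda>z. h z * \<rho> z) \<le> integral (cbox a b) (\<lambda>z. C * \<rho> z)"
  proof (rule integral_le)
    show "(\<lambda>z. h z * \<rho> z) integrable_on cbox a b"
      by (rule integrable_continuous) (intro continuous_intros ch cr)
    show "(\<lambda>z. C * \<rho> z) integrable_on cbox a b"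
      by (rule integrable_continuous) (intro continuous_intros cr)
    fix z assume z: "z \<in> cbox a b"
    show "h z * \<rho> z \<le> C * \<rho> z"
      using le[OF z] nn[of z] by (cases "\<rho> z = 0") (auto intro: mult_right_mono)
  qed
  also have "\<dots> = C" using one by simp
  finally show ?thesis .
qed

lemma IA_abs:
  fixes \<rho> h :: "'a::euclidean_space \<Rightarrow> real"
  assumes cr: "continuous_on (cbox a b) \<rho>" and nn: "\<And>z. \<rho> z \<ge> 0" and one: "integral (cbox a b) \<rho> = 1"
    and ch: "continuous_on (cbox a b) h" and le: "\<And>z. z \<in> cbox a b \<Longrightarrow> \<rho> z \<noteq> 0 \<Longrightarrow> \<bar>h z\<bar> \<le> C"
  shows "\<bar>integral (cbox a b) (\<lambda>z. h z * \<rho> z)\<bar> \<le> C"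
proof -
  have 1: "integral (cbox a b) (\<lambda>z. h z * \<rho> z) \<le> C"
    by (rule IA_le[OF cr nn one ch]) (use le in force)
  have 2: "integral (cbox a b) (\<lambda>z. - h z * \<rho> z) \<le> C"
    by (rule IA_le[OF cr nn one]) (use le ch in \<open>force intro: continuous_intros\<close>)+
  have "integral (cbox a b) (\<lambda>z. - h z * \<rho> z) = - integral (cbox a b) (\<lambda>z. h z * \<rho> z)"
    by simp
  thus ?thesis using 1 2 by linarith
qed

lemma IA_diff:
  fixes \<rho> h g :: "'a::euclidean_space \<Rightarrow> real"
  assumes cr: "continuous_on (cbox a b) \<rho>" and ch: "continuous_on (cbox a b) h" and cg: "continuous_on (cbox a b) g"
  shows "integral (cbox a b) (\<lambda>z. h z * \<rho> z) - integral (cbox a b) (\<lambda>z. g z * \<rho> z)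
     = integral (cbox a b) (\<lambda>z. (h z - g z) * \<rho> z)"
proof -
  have "(\<lambda>z. h z * \<rho> z) integrable_on cbox a b" "(\<lambda>z. g z * \<rho> z) integrable_on cbox a b"
    by (rule integrable_continuous, intro continuous_intros ch cg cr)+
  thus ?thesis by (simp add: integral_diff[symmetric] left_diff_distrib)
qed

lemma conv_zform:
  assumes G: "continuous_on UNIV G" and phi: "\<phi> \<in> Kf" and sub: "cball 0 1 \<subseteq> cbox a b"
  shows "conv G \<phi> x = integral (cbox a b) (\<lambda>z. G (x - z) * \<phi> z)"
proof -
  obtain a1 b1 where s1: "cball x 1 \<subseteq> cbox a1 b1"
    using bounded_subset_cbox_symmetric[OF bounded_cball] by blast
  let ?h = "\<lambda>y. G y * \<phi> (x - y)"
  have "(?h has_integral integral (cbox a1 b1) ?h) (cbox a1 b1)"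
    using conv_box(2)[OF G phi s1] by (simp add: has_integral_integral)
  hence "((\<lambda>y. if y \<in> cbox a1 b1 then ?h y else 0) has_integral integral (cbox a1 b1) ?h) UNIV"
    by (simp add: has_integral_restrict_UNIV)
  moreover have "(\<lambda>y. if y \<in> cbox a1 b1 then ?h y else 0) = ?h"
  proof
    fix y show "(if y \<in> cbox a1 b1 then ?h y else 0) = ?h y"
    proof (cases "y \<in> cbox a1 b1")
      case False
      hence "y \<notin> cball x 1" using s1 by blast
      hence "norm (x - y) \<ge> 1" by (simp add: dist_norm)
      thus ?thesis using Kf_zero[OF phi] False by simp
    qed simp
  qed
  ultimately have hB: "(?h has_integral conv G \<phi> x) (cbox a1 b1)"
    using conv_box[OF G phi s1] by (simp add: has_integral_integral)
  define S' where "S' = (\<lambda>z. (1 / (-1)) *\<^sub>R z + - ((1 / (-1)) *\<^sub>R x)) ` cbox a1 b1"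
  have "((\<lambda>z. ?h ((-1) *\<^sub>R z + x)) has_integral (1 / \<bar>-1\<bar> ^ DIM('a)) *\<^sub>R conv G \<phi> x) S'"
    unfolding S'_def by (rule has_integral_affinity[OF hB]) simp
  hence kS: "((\<lambda>z. G (x - z) * \<phi> z) has_integral conv G \<phi> x) S'"
    by (simp add: algebra_simps)
  have cS: "cball 0 1 \<subseteq> S'"
  proof
    fix z :: 'a assume z: "z \<in> cball 0 1"
    hence "x - z \<in> cball x 1" by (simp add: dist_norm)
    hence "x - z \<in> cbox a1 b1" using s1 by blast
    moreover have "z = (1 / (-1)) *\<^sub>R (x - z) + - ((1 / (-1)) *\<^sub>R x)" by (simp add: algebra_simps)
    ultimately show "z \<in> S'" unfolding S'_def by blast
  qed
  have vz: "G (x - z) * \<phi> z = 0" if "z \<notin> cball 0 1" for z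
  proof -
    have "norm z \<ge> 1" using that by simp
    thus ?thesis using Kf_zero[OF phi] by simp
  qed
  have eqS: "(\<lambda>z. if z \<in> S' then G (x - z) * \<phi> z else 0) = (\<lambda>z. G (x - z) * \<phi> z)"
  proof
    fix z show "(if z \<in> S' then G (x - z) * \<phi> z else 0) = G (x - z) * \<phi> z"
    proof (cases "z \<in> S'")
      case False
      hence "z \<notin> cball 0 1" using cS by blast
      thus ?thesis using vz[of z] False by simp
    qed simp
  qed
  have kU: "((\<lambda>z. G (x - z) * \<phi> z) has_integral conv G \<phi> x) UNIV"
    using has_integral_restrict_UNIV[of S' "\<lambda>z. G (x - z) * \<phi> z" "conv G \<phi> x"] kS unfolding eqS by simp
  have eqB: "(\<lambda>z. G (x - z) * \<phi> z) = (\<lambda>z. if z \<in> cbox a b then G (x - z) * \<phi> z else 0)"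
  proof
    fix z show "G (x - z) * \<phi> z = (if z \<in> cbox a b then G (x - z) * \<phi> z else 0)"
    proof (cases "z \<in> cbox a b")
      case False
      hence "z \<notin> cball 0 1" using sub by blast
      hence "norm z \<ge> 1" by simp
      thus ?thesis using Kf_zero[OF phi] False by simp
    qed simp
  qed
  have "((\<lambda>z. G (x - z) * \<phi> z) has_integral conv G \<phi> x) (cbox a b)"
    using has_integral_restrict_UNIV[of "cbox a b" "\<lambda>z. G (x - z) * \<phi> z" "conv G \<phi> x"] kU unfolding eqB[symmetric] by simp
  thus ?thesis by (simp add: integral_unique)
qed

lemma IA_ge:
  fixes \<rho> h :: "'a::euclidean_space \<Rightarrow> real"
  assumes cr: "continuous_on (cbox a b) \<rho>" and nn: "\<And>z. \<rho> z \<ge> 0" and one: "integral (cbox a b) \<rho> = 1"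
    and ch: "continuous_on (cbox a b) h" and le: "\<And>z. z \<in> cbox a b \<Longrightarrow> \<rho> z \<noteq> 0 \<Longrightarrow> C \<le> h z"
  shows "C \<le> integral (cbox a b) (\<lambda>z. h z * \<rho> z)"
proof -
  have "integral (cbox a b) (\<lambda>z. - h z * \<rho> z) \<le> - C"
    by (rule IA_le[OF cr nn one]) (use le ch in \<open>force intro: continuous_intros\<close>)+
  moreover have "integral (cbox a b) (\<lambda>z. - h z * \<rho> z) = - integral (cbox a b) (\<lambda>z. h z * \<rho> z)"
    by simp
  ultimately show ?thesis by linarith
qed

lemma IA_lin:
  fixes \<rho> h g k :: "'a::euclidean_space \<Rightarrow> real"
  assumes cr: "continuous_on (cbox a b) \<rho>" and ch: "continuous_on (cbox a b) h"
    and cg: "continuous_on (cbox a b) g" and ck: "continuous_on (cbox a b) k"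
  shows "integral (cbox a b) (\<lambda>z. h z * \<rho> z) - u * integral (cbox a b) (\<lambda>z. g z * \<rho> z)
       - v * integral (cbox a b) (\<lambda>z. k z * \<rho> z)
     = integral (cbox a b) (\<lambda>z. (h z - u * g z - v * k z) * \<rho> z)"
proof -
  have i1: "(\<lambda>z. h z * \<rho> z) integrable_on cbox a b" "(\<lambda>z. u * (g z * \<rho> z)) integrable_on cbox a b"
     "(\<lambda>z. v * (k z * \<rho> z)) integrable_on cbox a b"
     "(\<lambda>z. h z * \<rho> z - u * (g z * \<rho> z)) integrable_on cbox a b"
    by (rule integrable_continuous, intro continuous_intros ch cg ck cr)+
  have "integral (cbox a b) (\<lambda>z. (h z - u * g z - v * k z) * \<rho> z)
     = integral (cbox a b) (\<lambda>z. (h z * \<rho> z - u * (g z * \<rho> z)) - v * (k z * \<rho> z))"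
    by (simp add: algebra_simps)
  also have "\<dots> = integral (cbox a b) (\<lambda>z. h z * \<rho> z) - integral (cbox a b) (\<lambda>z. u * (g z * \<rho> z))
       - integral (cbox a b) (\<lambda>z. v * (k z * \<rho> z))"
    using i1 by (simp add: integral_diff)
  also have "\<dots> = integral (cbox a b) (\<lambda>z. h z * \<rho> z) - u * integral (cbox a b) (\<lambda>z. g z * \<rho> z)
       - v * integral (cbox a b) (\<lambda>z. k z * \<rho> z)"
    by simp
  finally show ?thesis by simp
qed

lemma deriv_bound:
  fixes \<psi> :: "real \<Rightarrow> real"
  assumes d: "(\<psi> has_real_derivative d) (at 1)" and z: "\<psi> 1 = 0"
    and b: "\<And>t. t > 0 \<Longrightarrow> \<bar>\<psi> t\<bar> \<le> K * \<bar>t - 1\<bar>"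
  shows "\<bar>d\<bar> \<le> K"
proof -
  have "((\<lambda>t. (\<psi> t - \<psi> 1) / (t - 1)) \<longlongrightarrow> d) (at 1)"
    using d unfolding has_field_derivative_iff .
  hence lim: "((\<lambda>t. \<bar>(\<psi> t - \<psi> 1) / (t - 1)\<bar>) \<longlongrightarrow> \<bar>d\<bar>) (at 1)"
    by (rule tendsto_rabs)
  have ev: "\<forall>\<^sub>F t in at 1. \<bar>(\<psi> t - \<psi> 1) / (t - 1)\<bar> \<le> K"
  proof -
    have "\<forall>\<^sub>F t in at (1::real). t \<in> {0<..}"
      by (rule eventually_at_in_open') auto
    moreover have "\<forall>\<^sub>F t in at (1::real). t \<noteq> 1" by (simp add: eventually_at_filter)
    ultimately show ?thesis
    proof eventually_elim
      case (elim t)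
      hence "\<bar>\<psi> t\<bar> \<le> K * \<bar>t - 1\<bar>" "\<bar>t - 1\<bar> > 0" using b by auto
      thus ?case using z by (simp add: abs_divide divide_le_eq)
    qed
  qed
  show ?thesis by (rule tendsto_upperbound[OF lim ev]) simp
qed


theorem lemma4p8:
  fixes F :: "real^'n^'n \<Rightarrow> real" and lam Lam :: real
  assumes "0 < lam" and "lam \<le> Lam"
    and "F1 lam Lam F" and "F2 F" and "F3 F"
  shows "\<exists>Fe :: real \<Rightarrow> real^'n^'n \<Rightarrow> real.
     (\<forall>e>0. smooth_on_sym (Fe e) \<and> F1 lam Lam (Fe e) \<and> F3 (Fe e)
        \<and> (\<forall>z\<in>sym_mats. \<bar>frechet_derivative (\<lambda>M. Fe e (symmetrize M)) (at z) z - Fe e z\<bar>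
                         \<le> sqrt (real CARD('n)) * Lam * e))
   \<and> (\<forall>\<delta>>0. \<exists>e0>0. \<forall>e. 0 < e \<and> e < e0 \<longrightarrow> (\<forall>M\<in>sym_mats. \<bar>Fe e M - F M\<bar> \<le> \<delta>))
   \<and> (\<exists>L. \<forall>e>0. L-lipschitz_on sym_mats (Fe e))"
proof -
  note lam = assms(1,2)
  let ?n = "real CARD('n)"
  have npos: "?n > 0" by simp
  define L where "L = Lam * ?n^2"
  have Lpos: "L > 0" unfolding L_def using lam by simp
  define \<kappa> where "\<kappa> = sqrt ?n * Lam / L"
  have kpos: "\<kappa> > 0" unfolding \<kappa>_def using lam Lpos by simp
  have Lk: "L * \<kappa> = sqrt ?n * Lam" unfolding \<kappa>_def using Lpos by simp
  define G where "G X = F (symmetrize X)" for X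
  have Glip: "\<bar>G X - G Y\<bar> \<le> L * norm (X - Y)" for X Y
    unfolding G_def L_def by (rule G_lip[OF lam assms(3)])
  have Gcont: "continuous_on UNIV G"
  proof (rule lipschitz_on_continuous_on)
    show "L-lipschitz_on UNIV G"
      by (rule lipschitz_onI) (use Glip Lpos in \<open>auto simp: dist_norm dist_real_def\<close>)
  qed
  have Ghom: "G (t *\<^sub>R X) = t * G X" if "t \<ge> 0" for t X
    unfolding G_def by (rule G_hom[OF assms(4) that])
  have Gsym: "G (symmetrize X) = G X" for X
    unfolding G_def by (simp add: sym_id[OF sym_in])
  have GF: "G M = F M" if "M \<in> sym_mats" for M
    unfolding G_def by (simp add: sym_id[OF that])
  have Fconc: "concave_on sym_mats F" using assms(5) unfolding F3_def .
  obtain a0 :: "real^'n^'n" where a0: "cball 0 1 \<subseteq> cbox (-a0) a0"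
    using bounded_subset_cbox_symmetric[OF bounded_cball] by blast
  define B where "B = cbox (-a0) a0"
  define \<rho>0 where "\<rho>0 = (\<lambda>x::real^'n^'n. bd 0 (x \<bullet> x))"
  have r0K: "\<rho>0 \<in> Kf" unfolding \<rho>0_def by (rule Kf.base)
  have r0c: "continuous_on B \<rho>0" using Kf_cont[OF r0K] continuous_on_subset by blast
  have r0nn: "\<rho>0 x \<ge> 0" for x unfolding \<rho>0_def by (rule bd0_nonneg)
  define c0 where "c0 = integral B \<rho>0"
  have c0pos: "c0 > 0"
  proof -
    have int: "\<rho>0 integrable_on B" unfolding B_def by (rule integrable_continuous) (use r0c B_def in simp)
    have ge: "c0 \<ge> 0" unfolding c0_def by (rule integral_nonneg[OF int]) (simp add: r0nn)
    have "c0 \<noteq> 0"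
    proof
      assume c: "c0 = 0"
      have "0 \<in> cball (0::real^'n^'n) 1" by simp
      hence "i \<in> cball (0::real^'n^'n) 1" "-i \<in> cball (0::real^'n^'n) 1" if "i \<in> Basis" for i
        using that by auto
      hence "-a0 \<bullet> i < a0 \<bullet> i" if "i \<in> Basis" for i
      proof -
        have "i \<in> cbox (-a0) a0" using a0 \<open>i \<in> Basis \<Longrightarrow> i \<in> cball 0 1\<close> that by blast
        hence "i \<bullet> i \<le> a0 \<bullet> i" using that by (auto simp: mem_box)
        thus ?thesis using that by simp
      qed
      hence bne: "box (-a0) a0 \<noteq> {}" by (simp add: box_ne_empty)
      have "\<rho>0 0 = 0"
      proof (rule has_integral_0_cbox_imp_0[of "-a0" a0 \<rho>0])
        show "continuous_on (cbox (-a0) a0) \<rho>0" using r0c B_def by simp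
        show "(\<rho>0 has_integral 0) (cbox (-a0) a0)" using int c unfolding c0_def B_def
          by (metis has_integral_integral)
        show "0 \<in> cbox (-a0) a0" using a0 by auto
      qed (use r0nn bne in auto)
      moreover have "\<rho>0 0 > 0" unfolding \<rho>0_def by (simp add: bd0_pos)
      ultimately show False by simp
    qed
    thus ?thesis using ge by simp
  qed
  define \<rho> where "\<rho> = (\<lambda>x. (1 / c0) * \<rho>0 x)"
  have rK: "\<rho> \<in> Kf" unfolding \<rho>_def by (rule Kf.smul[OF r0K])
  have rc: "continuous_on B \<rho>" using Kf_cont[OF rK] continuous_on_subset by blast
  have rnn: "\<rho> x \<ge> 0" for x unfolding \<rho>_def using r0nn c0pos by simp
  have rone: "integral B \<rho> = 1" unfolding \<rho>_def using c0pos by (simp add: c0_def[symmetric])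
  have rsupp: "norm w < 1" if "\<rho> w \<noteq> 0" for w
    using Kf_zero[OF rK, of w] that by force
  define Fe where "Fe e M = (\<kappa> * e) * conv G \<rho> (M /\<^sub>R (\<kappa> * e))" for e M
  have contG: "continuous_on B (\<lambda>w. G (M - r *\<^sub>R w))" for M r
    by (rule continuous_on_compose2[OF Gcont]) (auto intro!: continuous_intros)
  have KF: "Fe e M = integral B (\<lambda>w. G (M - (\<kappa> * e) *\<^sub>R w) * \<rho> w)" if "e > 0" for e M
  proof -
    define r where "r = \<kappa> * e"
    have r: "r > 0" unfolding r_def using kpos that by simp
    have "Fe e M = r * integral B (\<lambda>w. G (M /\<^sub>R r - w) * \<rho> w)"
      unfolding Fe_def r_def[symmetric] B_def using conv_zform[OF Gcont rK a0] by simp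
    also have "\<dots> = integral B (\<lambda>w. (r * G (M /\<^sub>R r - w)) * \<rho> w)"
      using integral_cmul[of B r "\<lambda>w. G (M /\<^sub>R r - w) * \<rho> w"] by (simp add: mult.assoc)
    also have "\<dots> = integral B (\<lambda>w. G (M - r *\<^sub>R w) * \<rho> w)"
    proof -
      have "r * G (M /\<^sub>R r - w) = G (M - r *\<^sub>R w)" for w
      proof -
        have "r * G (M /\<^sub>R r - w) = G (r *\<^sub>R (M /\<^sub>R r - w))" using Ghom r by simp
        also have "r *\<^sub>R (M /\<^sub>R r - w) = M - r *\<^sub>R w" using r by (simp add: algebra_simps)
        finally show ?thesis .
      qed
      thus ?thesis by simp
    qed
    finally show ?thesis unfolding r_def .
  qed
  have IAB: "\<bar>integral B (\<lambda>w. h w * \<rho> w)\<bar> \<le> C"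
    if "continuous_on B h" "\<And>w. w \<in> B \<Longrightarrow> \<rho> w \<noteq> 0 \<Longrightarrow> \<bar>h w\<bar> \<le> C" for h C
    using IA_abs[OF rc[unfolded B_def] rnn rone[unfolded B_def]] that unfolding B_def by blast
  have diffB: "integral B (\<lambda>w. h w * \<rho> w) - integral B (\<lambda>w. g w * \<rho> w) = integral B (\<lambda>w. (h w - g w) * \<rho> w)"
    if "continuous_on B h" "continuous_on B g" for h g
    using IA_diff[OF rc[unfolded B_def]] that unfolding B_def by blast
  have FeLip: "\<bar>Fe e X - Fe e Y\<bar> \<le> L * norm (X - Y)" if "e > 0" for e X Y
  proof -
    have "Fe e X - Fe e Y = integral B (\<lambda>w. (G (X - (\<kappa> * e) *\<^sub>R w) - G (Y - (\<kappa> * e) *\<^sub>R w)) * \<rho> w)"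
      unfolding KF[OF that] by (rule diffB[OF contG contG])
    also have "\<bar>\<dots>\<bar> \<le> L * norm (X - Y)"
    proof (rule IAB)
      show "continuous_on B (\<lambda>w. G (X - (\<kappa> * e) *\<^sub>R w) - G (Y - (\<kappa> * e) *\<^sub>R w))"
        by (intro continuous_intros contG)
      fix w show "\<bar>G (X - (\<kappa> * e) *\<^sub>R w) - G (Y - (\<kappa> * e) *\<^sub>R w)\<bar> \<le> L * norm (X - Y)"
        using Glip[of "X - (\<kappa> * e) *\<^sub>R w" "Y - (\<kappa> * e) *\<^sub>R w"] by simp
    qed
    finally show ?thesis .
  qed
  have FeApprox: "\<bar>Fe e M - G M\<bar> \<le> L * (\<kappa> * e)" if "e > 0" for e M
  proof -
    have "G M = integral B (\<lambda>w. G M * \<rho> w)" using rone by simp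
    hence "Fe e M - G M = integral B (\<lambda>w. (G (M - (\<kappa> * e) *\<^sub>R w) - G M) * \<rho> w)"
      unfolding KF[OF that] using diffB[OF contG, of "\<lambda>w. G M" M "\<kappa> * e"] rone by simp
    also have "\<bar>\<dots>\<bar> \<le> L * (\<kappa> * e)"
    proof (rule IAB)
      show "continuous_on B (\<lambda>w. G (M - (\<kappa> * e) *\<^sub>R w) - G M)"
        by (intro continuous_intros contG)
      fix w assume "\<rho> w \<noteq> 0"
      hence w: "norm w < 1" by (rule rsupp)
      have "\<bar>G (M - (\<kappa> * e) *\<^sub>R w) - G M\<bar> \<le> L * norm ((\<kappa> * e) *\<^sub>R w)"
        using Glip[of "M - (\<kappa> * e) *\<^sub>R w" M] by simp
      also have "\<dots> \<le> L * (\<kappa> * e)"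
        using w kpos that Lpos by (simp add: mult_left_le)
      finally show "\<bar>G (M - (\<kappa> * e) *\<^sub>R w) - G M\<bar> \<le> L * (\<kappa> * e)" .
    qed
    finally show ?thesis .
  qed
  have FeHom: "\<bar>Fe e (t *\<^sub>R z) - t * Fe e z\<bar> \<le> L * (\<kappa> * e) * \<bar>t - 1\<bar>" if "e > 0" "t > 0" for e t z
  proof -
    let ?r = "\<kappa> * e"
    have tF: "t * Fe e z = integral B (\<lambda>w. (t * G (z - ?r *\<^sub>R w)) * \<rho> w)"
      unfolding KF[OF that(1)] using integral_cmul[of B t "\<lambda>w. G (z - ?r *\<^sub>R w) * \<rho> w"] by (simp add: mult.assoc)
    have "Fe e (t *\<^sub>R z) - t * Fe e z = integral B (\<lambda>w. (G (t *\<^sub>R z - ?r *\<^sub>R w) - t * G (z - ?r *\<^sub>R w)) * \<rho> w)"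
    proof -
      have "Fe e (t *\<^sub>R z) - t * Fe e z = integral B (\<lambda>w. G (t *\<^sub>R z - ?r *\<^sub>R w) * \<rho> w)
          - integral B (\<lambda>w. (t * G (z - ?r *\<^sub>R w)) * \<rho> w)"
        using tF KF[OF that(1), of "t *\<^sub>R z"] by simp
      also have "\<dots> = integral B (\<lambda>w. (G (t *\<^sub>R z - ?r *\<^sub>R w) - t * G (z - ?r *\<^sub>R w)) * \<rho> w)"
        by (rule diffB) (intro continuous_intros contG)+
      finally show ?thesis .
    qed
    also have "\<bar>\<dots>\<bar> \<le> L * ?r * \<bar>t - 1\<bar>"
    proof (rule IAB)
      show "continuous_on B (\<lambda>w. G (t *\<^sub>R z - ?r *\<^sub>R w) - t * G (z - ?r *\<^sub>R w))"
        by (intro continuous_intros contG)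
      fix w assume "\<rho> w \<noteq> 0"
      hence w: "norm w < 1" by (rule rsupp)
      have "t * G (z - ?r *\<^sub>R w) = G (t *\<^sub>R z - (t * ?r) *\<^sub>R w)"
        using Ghom[of t "z - ?r *\<^sub>R w"] that by (simp add: algebra_simps)
      hence "\<bar>G (t *\<^sub>R z - ?r *\<^sub>R w) - t * G (z - ?r *\<^sub>R w)\<bar> \<le> L * norm ((t * ?r - ?r) *\<^sub>R w)"
        using Glip[of "t *\<^sub>R z - ?r *\<^sub>R w" "t *\<^sub>R z - (t * ?r) *\<^sub>R w"] by (simp add: algebra_simps)
      also have "norm ((t * ?r - ?r) *\<^sub>R w) = ?r * \<bar>t - 1\<bar> * norm w"
      proof -
        have "\<bar>t * ?r - ?r\<bar> = ?r * \<bar>t - 1\<bar>"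
        proof -
          have "t * ?r - ?r = ?r * (t - 1)" by (simp add: algebra_simps)
          thus ?thesis using kpos that by (simp add: abs_mult)
        qed
        thus ?thesis by simp
      qed
      also have "L * (?r * \<bar>t - 1\<bar> * norm w) \<le> L * ?r * \<bar>t - 1\<bar>"
        using w kpos that Lpos by (simp add: mult_left_le)
      finally show "\<bar>G (t *\<^sub>R z - ?r *\<^sub>R w) - t * G (z - ?r *\<^sub>R w)\<bar> \<le> L * ?r * \<bar>t - 1\<bar>"
        by simp
    qed
    finally show ?thesis .
  qed
  have IAle: "integral B (\<lambda>w. h w * \<rho> w) \<le> C"
    if "continuous_on B h" "\<And>w. w \<in> B \<Longrightarrow> \<rho> w \<noteq> 0 \<Longrightarrow> h w \<le> C" for h C
    using IA_le[OF rc[unfolded B_def] rnn rone[unfolded B_def]] that unfolding B_def by blast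
  have IAge: "C \<le> integral B (\<lambda>w. h w * \<rho> w)"
    if "continuous_on B h" "\<And>w. w \<in> B \<Longrightarrow> \<rho> w \<noteq> 0 \<Longrightarrow> C \<le> h w" for h C
    using IA_ge[OF rc[unfolded B_def] rnn rone[unfolded B_def]] that unfolding B_def by blast
  have Fe_fun: "Fe e = (\<lambda>x. (\<kappa> * e) * conv G \<rho> (x /\<^sub>R (\<kappa> * e)))" for e
    by (rule ext) (simp add: Fe_def)
  have famMem: "Fe e \<in> Fam G (\<kappa> * e)" for e
    unfolding Fam_def Fe_fun using rK by blast
  have symeq: "(\<lambda>M. Fe e (symmetrize M)) = Fe e" if "e > 0" for e
  proof
    fix M
    have "G (symmetrize M - (\<kappa> * e) *\<^sub>R w) = G (M - (\<kappa> * e) *\<^sub>R w)" for w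
    proof -
      have "symmetrize (symmetrize M - (\<kappa> * e) *\<^sub>R w) = symmetrize (M - (\<kappa> * e) *\<^sub>R w)"
        by (simp add: sym_diff sym_scale sym_id[OF sym_in])
      thus ?thesis using Gsym by metis
    qed
    thus "Fe e (symmetrize M) = Fe e M" unfolding KF[OF that] by simp
  qed
  have A: "\<forall>e>0. smooth_on_sym (Fe e) \<and> F1 lam Lam (Fe e) \<and> F3 (Fe e)
        \<and> (\<forall>z\<in>sym_mats. \<bar>frechet_derivative (\<lambda>M. Fe e (symmetrize M)) (at z) z - Fe e z\<bar>
                         \<le> sqrt (real CARD('n)) * Lam * e)"
  proof (intro allI impI conjI)
    fix e :: real assume e: "e > 0"
    let ?r = "\<kappa> * e"
    show "smooth_on_sym (Fe e)"
      unfolding smooth_on_sym_def symeq[OF e] by (rule Fam_smooth[OF Gcont famMem])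
    show "F1 lam Lam (Fe e)"
      unfolding F1_def
    proof (intro ballI conjI)
      fix M N :: "real^'n^'n" assume MN: "M \<in> sym_mats" "N \<in> sym_mats"
      have eq: "Fe e M - Fe e N = integral B (\<lambda>w. (G (M - ?r *\<^sub>R w) - G (N - ?r *\<^sub>R w)) * \<rho> w)"
        unfolding KF[OF e] by (rule diffB[OF contG contG])
      have pw: "pucci_minus lam Lam (M - N) \<le> G (M - ?r *\<^sub>R w) - G (N - ?r *\<^sub>R w) \<and>
                G (M - ?r *\<^sub>R w) - G (N - ?r *\<^sub>R w) \<le> pucci_plus lam Lam (M - N)" for w
      proof -
        have d: "symmetrize (M - ?r *\<^sub>R w) - symmetrize (N - ?r *\<^sub>R w) = M - N"
          using MN by (simp add: sym_diff[symmetric] sym_id sym_mats_diff)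
        show ?thesis
          using assms(3) sym_in[of "M - ?r *\<^sub>R w"] sym_in[of "N - ?r *\<^sub>R w"] unfolding F1_def G_def d[symmetric]
          by blast
      qed
      have cc: "continuous_on B (\<lambda>w. G (M - ?r *\<^sub>R w) - G (N - ?r *\<^sub>R w))"
        by (intro continuous_intros contG)
      show "pucci_minus lam Lam (M - N) \<le> Fe e M - Fe e N"
        unfolding eq by (rule IAge[OF cc]) (use pw in blast)
      show "Fe e M - Fe e N \<le> pucci_plus lam Lam (M - N)"
        unfolding eq by (rule IAle[OF cc]) (use pw in blast)
    qed
    show "F3 (Fe e)"
      unfolding F3_def concave_on_iff
    proof (intro conjI ballI allI impI)
      show "convex (sym_mats :: (real^'n^'n) set)" using concave_on_iff[THEN iffD1, OF Fconc] by (rule conjunct1)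
      fix x y :: "real^'n^'n" and u v :: real
      assume xy: "x \<in> sym_mats" "y \<in> sym_mats" and uv: "0 \<le> u" "0 \<le> v" "u + v = 1"
      have lin: "Fe e (u *\<^sub>R x + v *\<^sub>R y) - u * Fe e x - v * Fe e y
          = integral B (\<lambda>w. (G (u *\<^sub>R x + v *\<^sub>R y - ?r *\<^sub>R w) - u * G (x - ?r *\<^sub>R w) - v * G (y - ?r *\<^sub>R w)) * \<rho> w)"
        unfolding KF[OF e] B_def
        by (rule IA_lin[OF rc[unfolded B_def]]) (use contG in \<open>auto simp: B_def\<close>)
      have pw: "0 \<le> G (u *\<^sub>R x + v *\<^sub>R y - ?r *\<^sub>R w) - u * G (x - ?r *\<^sub>R w) - v * G (y - ?r *\<^sub>R w)" for w
      proof -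
        have v: "v = 1 - u" using uv by simp
        have s: "symmetrize (u *\<^sub>R x + v *\<^sub>R y - ?r *\<^sub>R w)
            = u *\<^sub>R symmetrize (x - ?r *\<^sub>R w) + v *\<^sub>R symmetrize (y - ?r *\<^sub>R w)"
        proof -
          have yx: "symmetrize (y + u *\<^sub>R x) = y + u *\<^sub>R x"
            using sym_id[OF sym_mats_lin[OF xy(2) xy(1), of 1 u]] by simp
          show ?thesis using xy yx unfolding v by (simp add: sym_diff sym_scale sym_lin sym_id algebra_simps)
        qed
        have "u * F (symmetrize (x - ?r *\<^sub>R w)) + v * F (symmetrize (y - ?r *\<^sub>R w))
            \<le> F (u *\<^sub>R symmetrize (x - ?r *\<^sub>R w) + v *\<^sub>R symmetrize (y - ?r *\<^sub>R w))"
          using concave_on_iff[THEN iffD1, OF Fconc, THEN conjunct2, rule_format,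
              OF sym_in[of "x - ?r *\<^sub>R w"] sym_in[of "y - ?r *\<^sub>R w"] uv] .
        thus ?thesis unfolding G_def s by simp
      qed
      have "0 \<le> Fe e (u *\<^sub>R x + v *\<^sub>R y) - u * Fe e x - v * Fe e y"
        unfolding lin by (rule IAge) (use pw in \<open>auto intro!: continuous_intros contG\<close>)
      thus "u * Fe e x + v * Fe e y \<le> Fe e (u *\<^sub>R x + v *\<^sub>R y)" by simp
    qed
    show "\<forall>z\<in>sym_mats. \<bar>frechet_derivative (\<lambda>M. Fe e (symmetrize M)) (at z) z - Fe e z\<bar>
                         \<le> sqrt (real CARD('n)) * Lam * e"
    proof
      fix z :: "real^'n^'n" assume z: "z \<in> sym_mats"
      have diff: "Fe e differentiable (at z)"
        using Fam_props[OF Gcont famMem[of e]] by (simp add: differentiable_on_def)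
      define D where "D = frechet_derivative (Fe e) (at z)"
      have hasD: "(Fe e has_derivative D) (at z)" unfolding D_def using diff frechet_derivative_works by blast
      have linD: "linear D" unfolding D_def by (rule linear_frechet_derivative[OF diff])
      have hs: "((\<lambda>t::real. t *\<^sub>R z) has_derivative (\<lambda>h. h *\<^sub>R z)) (at 1)"
        by (rule bounded_linear_imp_has_derivative) (rule bounded_linear_scaleR_left)
      have hasD1: "(Fe e has_derivative D) (at ((\<lambda>t::real. t *\<^sub>R z) 1))" using hasD by simp
      have comp: "((\<lambda>t. Fe e (t *\<^sub>R z)) has_derivative (\<lambda>h. D (h *\<^sub>R z))) (at 1)"
        using has_derivative_compose[OF hs hasD1] by (simp add: o_def)
      have "((\<lambda>t. Fe e (t *\<^sub>R z) - t * Fe e z) has_derivative (\<lambda>h. D (h *\<^sub>R z) - h * Fe e z)) (at 1)"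
        by (intro has_derivative_diff comp) (auto intro!: derivative_eq_intros)
      moreover have "(\<lambda>h. D (h *\<^sub>R z) - h * Fe e z) = (*) (D z - Fe e z)"
        by (rule ext) (simp add: linear_scale[OF linD] algebra_simps)
      ultimately have der: "((\<lambda>t. Fe e (t *\<^sub>R z) - t * Fe e z) has_real_derivative (D z - Fe e z)) (at 1)"
        by (simp add: has_field_derivative_def)
      have "\<bar>D z - Fe e z\<bar> \<le> L * ?r"
        by (rule deriv_bound[OF der]) (use FeHom[OF e] in auto)
      moreover have "frechet_derivative (\<lambda>M. Fe e (symmetrize M)) (at z) z = D z"
        unfolding symeq[OF e] D_def ..
      ultimately show "\<bar>frechet_derivative (\<lambda>M. Fe e (symmetrize M)) (at z) z - Fe e z\<bar>
                         \<le> sqrt (real CARD('n)) * Lam * e"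
        using Lk by (simp add: mult.assoc[symmetric])
    qed
  qed
  have Bc: "\<forall>\<delta>>0. \<exists>e0>0. \<forall>e. 0 < e \<and> e < e0 \<longrightarrow> (\<forall>M::real^'n^'n\<in>sym_mats. \<bar>Fe e M - F M\<bar> \<le> \<delta>)"
  proof (intro allI impI)
    fix \<delta> :: real assume d: "\<delta> > 0"
    have sL: "sqrt ?n * Lam > 0" using lam by simp
    define e0 where "e0 = \<delta> / (sqrt ?n * Lam)"
    have e0: "e0 > 0" unfolding e0_def using d sL by simp
    show "\<exists>e0>0. \<forall>e. 0 < e \<and> e < e0 \<longrightarrow> (\<forall>M::real^'n^'n\<in>sym_mats. \<bar>Fe e M - F M\<bar> \<le> \<delta>)"
    proof (intro exI[of _ e0] conjI allI impI ballI e0)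
      fix e :: real and M :: "real^'n^'n" assume e: "0 < e \<and> e < e0" and M: "M \<in> sym_mats"
      have "\<bar>Fe e M - F M\<bar> \<le> L * (\<kappa> * e)" using FeApprox[of e M] e GF[OF M] by simp
      also have "\<dots> = (sqrt ?n * Lam) * e" using Lk by (simp add: mult.assoc[symmetric])
      also have "\<dots> \<le> (sqrt ?n * Lam) * e0" using e sL by (intro mult_left_mono) auto
      also have "\<dots> = \<delta>" unfolding e0_def using sL lam by (simp add: field_simps)
      finally show "\<bar>Fe e M - F M\<bar> \<le> \<delta>" .
    qed
  qed
  have Cc: "\<exists>L. \<forall>e>0. L-lipschitz_on sym_mats (Fe e)"
  proof (intro exI[of _ L] allI impI)
    fix e :: real assume e: "e > 0"
    show "L-lipschitz_on sym_mats (Fe e)"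
      by (rule lipschitz_onI) (use FeLip[OF e] Lpos in \<open>auto simp: dist_norm dist_real_def\<close>)
  qed
  show ?thesis using A Bc Cc by blast
qed


end
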